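(* Let $\mathcal{Y}$ be a finite nonempty set, $p,q$ probability distributions on $\mathcal{Y}$ with full support and $q$ not constant. Let $\Delta\ge0$ be such that there exists $\alpha\ge 0$ with $D_{\mathrm{KL}}(T(q,p,\alpha)\|p)=\Delta$; denote this (unique) $\alpha$ by $\alpha(\Delta)$ and let $\phi_\Delta=T(q,p,\alpha(\Delta))$. Let $\epsilon\in\mathbb{R}$ and let $\psi$ be a probability distribution on $\mathcal{Y}$ such that $$D_{\mathrm{KL}}(\psi\|p)\le\Delta\quad\text{and}\quad H(\psi\|q)\le H(\phi_\Delta\|q)+\epsilon.$$ Then $D_{\mathrm{KL}}(\psi\,\|\,\phi_\Delta)\le \alpha(\Delta)\,\epsilon$.
   Context: For distributions $a,b$ on a finite set, $H(a\|b)=\sum_y a(y)\log\frac{1}{b(y)}$ (cross entropy) and $D_{\mathrm{KL}}(a\|b)=\sum_y a(y)\log\frac{a(y)}{b(y)}$ (natural logarithms). The mismatched tilt is, for $\alpha\in\mathbb{R}$, $T(q,p,\alpha)(y)=\frac{p(y)q(y)^{\alpha}}{\sum_{z}p(z)q(z)^\alpha}$. (The distribution $\phi_\Delta$ is the optimal solution of minimizing $H(\phi\|q)$ subject to $D_{\mathrm{KL}}(\phi\|p)\le\Delta$.) *)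

theory Defs
  imports "HOL-Analysis.Analysis"
begin

definition is_distr :: "('a::finite \<Rightarrow> real) \<Rightarrow> bool" where
  "is_distr a \<longleftrightarrow> (\<forall>y. 0 \<le> a y) \<and> (\<Sum>y\<in>UNIV. a y) = 1"

definition cross_entropy :: "('a::finite \<Rightarrow> real) \<Rightarrow> ('a \<Rightarrow> real) \<Rightarrow> real" where
  "cross_entropy a b = (\<Sum>y\<in>UNIV. a y * ln (1 / b y))"

definition KL :: "('a::finite \<Rightarrow> real) \<Rightarrow> ('a \<Rightarrow> real) \<Rightarrow> real" where
  "KL a b = (\<Sum>y\<in>UNIV. if a y = 0 then 0 else a y * ln (a y / b y))"

definition tilt :: "('a::finite \<Rightarrow> real) \<Rightarrow> ('a \<Rightarrow> real) \<Rightarrow> real \<Rightarrow> 'a \<Rightarrow> real" where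
  "tilt q p \<alpha> y = p y * q y powr \<alpha> / (\<Sum>z\<in>UNIV. p z * q z powr \<alpha>)"

end

theory Submission
  imports Defs
begin

lemma KL_tilt_decomp:
  fixes p q a :: "'a::finite \<Rightarrow> real" and \<alpha> :: real
  assumes p_pos: "\<forall>y. p y > 0" and q_pos: "\<forall>y. q y > 0"
    and a_distr: "is_distr a"
  shows "KL a (tilt q p \<alpha>) = KL a p + \<alpha> * cross_entropy a q
           + ln (\<Sum>z\<in>UNIV. p z * q z powr \<alpha>)"
proof -
  define Z where "Z = (\<Sum>z\<in>UNIV. p z * q z powr \<alpha>)"
  have Zpos: "Z > 0" unfolding Z_def
    using p_pos q_pos by (intro sum_pos) (metis mult_pos_pos powr_gt_zero less_irrefl UNIV_not_empty finite_class.finite_UNIV)+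
  have term_eq: "(if a y = 0 then 0 else a y * ln (a y / tilt q p \<alpha> y))
      = (if a y = 0 then 0 else a y * ln (a y / p y)) + \<alpha> * (a y * ln (1 / q y)) + a y * ln Z"
    for y
  proof (cases "a y = 0")
    case True then show ?thesis by simp
  next
    case False
    have ay: "a y > 0" using a_distr False unfolding is_distr_def
      by (metis less_eq_real_def)
    have py: "p y > 0" and qy: "q y > 0" using p_pos q_pos by auto
    have qa: "q y powr \<alpha> > 0" using qy by simp
    have t: "tilt q p \<alpha> y = p y * q y powr \<alpha> / Z" unfolding tilt_def Z_def by simp
    have "ln (a y / tilt q p \<alpha> y) = ln (a y) - (ln (p y) + \<alpha> * ln (q y) - ln Z)"
      using ay py qa Zpos qy by (simp add: t ln_div ln_mult ln_powr)
    moreover have "ln (a y / p y) = ln (a y) - ln (p y)" using ay py by (simp add: ln_div)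
    moreover have "ln (1 / q y) = - ln (q y)" using qy by (simp add: ln_div)
    ultimately have "ln (a y / tilt q p \<alpha> y) = ln (a y / p y) + \<alpha> * ln (1 / q y) + ln Z"
      by simp
    then show ?thesis using False by (simp add: distrib_left)
  qed
  have sa: "(\<Sum>y\<in>UNIV. a y) = 1" using a_distr unfolding is_distr_def by simp
  have "KL a (tilt q p \<alpha>) = (\<Sum>y\<in>UNIV. (if a y = 0 then 0 else a y * ln (a y / p y))
        + \<alpha> * (a y * ln (1 / q y)) + a y * ln Z)"
    unfolding KL_def using term_eq by simp
  also have "\<dots> = KL a p + \<alpha> * cross_entropy a q + (\<Sum>y\<in>UNIV. a y) * ln Z"
    unfolding KL_def cross_entropy_def
    by (simp add: sum.distrib sum_distrib_left sum_distrib_right)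
  finally show ?thesis using sa Z_def by simp
qed

lemma tilt_distr:
  fixes p q :: "'a::finite \<Rightarrow> real" and \<alpha> :: real
  assumes p_pos: "\<forall>y. p y > 0" and q_pos: "\<forall>y. q y > 0"
  shows "is_distr (tilt q p \<alpha>)"
proof -
  define Z where "Z = (\<Sum>z\<in>UNIV. p z * q z powr \<alpha>)"
  have Zpos: "Z > 0" unfolding Z_def
    using p_pos q_pos by (intro sum_pos) (metis mult_pos_pos powr_gt_zero less_irrefl UNIV_not_empty finite_class.finite_UNIV)+
  have "(\<Sum>y\<in>UNIV. tilt q p \<alpha> y) = (\<Sum>y\<in>UNIV. p y * q y powr \<alpha>) / Z"
    unfolding tilt_def Z_def by (rule sum_divide_distrib[symmetric])
  then have "(\<Sum>y\<in>UNIV. tilt q p \<alpha> y) = 1" using Zpos Z_def by simp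
  moreover have "\<forall>y. 0 \<le> tilt q p \<alpha> y" unfolding tilt_def
    using p_pos q_pos Zpos Z_def by (simp add: less_imp_le)
  ultimately show ?thesis unfolding is_distr_def by simp
qed

lemma KL_self:
  fixes a :: "'a::finite \<Rightarrow> real"
  shows "KL a a = 0"
  unfolding KL_def by (rule sum.neutral) simp

theorem mainTheorem2:
  fixes p q \<psi> :: "'a::finite \<Rightarrow> real"
    and \<Delta> \<alpha> \<epsilon> :: real
  assumes p_distr: "is_distr p" and p_pos: "\<forall>y. p y > 0"
    and q_distr: "is_distr q" and q_pos: "\<forall>y. q y > 0"
    and q_nonconst: "\<exists>y z. q y \<noteq> q z"
    and Delta_nonneg: "\<Delta> \<ge> 0"
    and alpha_nonneg: "\<alpha> \<ge> 0"
    and alpha_Delta: "KL (tilt q p \<alpha>) p = \<Delta>"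
    and psi_distr: "is_distr \<psi>"
    and psi_KL: "KL \<psi> p \<le> \<Delta>"
    and psi_H: "cross_entropy \<psi> q \<le> cross_entropy (tilt q p \<alpha>) q + \<epsilon>"
  shows "KL \<psi> (tilt q p \<alpha>) \<le> \<alpha> * \<epsilon>"
proof -
  note d1 = KL_tilt_decomp[OF p_pos q_pos psi_distr, of \<alpha>]
  note d2 = KL_tilt_decomp[OF p_pos q_pos tilt_distr[OF p_pos q_pos, of \<alpha>], of \<alpha>]
  have "\<alpha> * cross_entropy \<psi> q \<le> \<alpha> * (cross_entropy (tilt q p \<alpha>) q + \<epsilon>)"
    using psi_H alpha_nonneg by (simp add: mult_left_mono)
  then show ?thesis using d1 d2 KL_self[of "tilt q p \<alpha>"] alpha_Delta psi_KL
    by (simp add: algebra_simps)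
qed

end
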